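(* Let $0<\alpha<1$ and $1\le i\le k\le 6$, and let $w^{(k,i)}_{n,j}$, $\omega^{(k,i)}_m$ be the weights defined in the context. Let $u_0,\dots,u_{k-1}\in\mathbb{C}$ be arbitrary (bounded) starting values and define the power series $$g^{(k,i)}(\xi)=\sum_{n=0}^{\infty}g^{(k,i)}_n\xi^n,\qquad g^{(k,i)}_n=-\sum_{j=0}^{k-1}u_{j}\big(w_{n+k,j}^{(k,i)}+\omega_{n+k-j}^{(k,i)}\big).$$ Then $g^{(k,i)}_n\to 0$ as $n\to\infty$.
   Context: Uniform grid $t_n=n\Delta t$, $\Delta t>0$, $I_j=[t_{j-1},t_j]$. For a function $u$ and integers $m\ge1$, $j$, $q$, let $p^{m}_{j,q}$ be the polynomial of degree at most $m$ interpolating $u$ at $t_{j+q-m-1},\dots,t_{j+q-1}$. For $1\le i\le k\le 6$ and $n\ge k$, let $P^{k}_{i,n}$ be the continuous piecewise polynomial on $[0,t_n]$ equal on $I_j$ to $p^{k-1}_{j,k-j}$ for $1\le j\le k-i$, to $p^{k}_{j,i}$ for $k-i+1\le j\le n-i+1$, and to $p^{k}_{j,n+1-j}$ for $n-i+2\le j\le n$, and set $D^{\alpha}_{k,i}u_n=\frac{1}{\Gamma(1-\alpha)}\int_0^{t_n}(t_n-\xi)^{-\alpha}(P^{k}_{i,n})'(\xi)\,\mathrm{d}\xi$. This is a linear combination of $u_0=u(t_0),\dots,u_n=u(t_n)$; for $k\le j\le n$ the coefficient of $u_j$ in $(\Delta t)^{\alpha}D^{\alpha}_{k,i}u_n$ depends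 only on $n-j$ (not on $n$ or $\Delta t$ separately) and is denoted $\omega^{(k,i)}_{n-j}$; this defines $\omega^{(k,i)}_m$ for all $m\ge 0$. The weights $w^{(k,i)}_{n,j}$ ($0\le j\le k-1$, $n\ge k$) are then defined by $(\Delta t)^{\alpha}D^{\alpha}_{k,i}u_n=\sum_{j=0}^{k-1}w^{(k,i)}_{n,j}u_j+\sum_{j=0}^{n}\omega^{(k,i)}_{n-j}u_j$ (for arbitrary values $u_j$). *)

theory Defs
  imports "HOL-Analysis.Analysis" "HOL-Computational_Algebra.Polynomial"
begin

text \<open>Grid points t_l = l * dt.  The polynomial p^m_{j,q} of degree at most m
interpolating the grid values u_l at t_{j+q-m-1}, ..., t_{j+q-1}.
(In every use below j+q >= m+1, so the natural-number subtraction never truncates.)\<close>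
definition interp :: "real \<Rightarrow> (nat \<Rightarrow> real) \<Rightarrow> nat \<Rightarrow> nat \<Rightarrow> nat \<Rightarrow> real poly" where
  "interp dt u m j q =
     (THE p. degree p \<le> m \<and>
        (\<forall>l\<in>{j + q - m - 1 .. j + q - 1}. poly p (real l * dt) = u l))"

text \<open>The polynomial piece of P^k_{i,n} on I_j = [t_{j-1}, t_j].\<close>
definition piece :: "real \<Rightarrow> (nat \<Rightarrow> real) \<Rightarrow> nat \<Rightarrow> nat \<Rightarrow> nat \<Rightarrow> nat \<Rightarrow> real poly" where
  "piece dt u k i n j =
     (if j \<le> k - i then interp dt u (k - 1) j (k - j)
      else if j \<le> n - i + 1 then interp dt u k j i
      else interp dt u k j (n + 1 - j))"

text \<open>D^alpha_{k,i} u_n = 1/Gamma(1-alpha) * int_0^{t_n} (t_n - xi)^(-alpha) (P^k_{i,n})'(xi) dxi,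
  written as the sum of the integrals over the grid intervals I_1, ..., I_n.\<close>
definition Dfrac :: "real \<Rightarrow> real \<Rightarrow> nat \<Rightarrow> nat \<Rightarrow> (nat \<Rightarrow> real) \<Rightarrow> nat \<Rightarrow> real" where
  "Dfrac dt \<alpha> k i u n =
     (1 / Gamma (1 - \<alpha>)) *
     (\<Sum>j = 1..n. integral {real (j - 1) * dt .. real j * dt}
        (\<lambda>\<xi>. (real n * dt - \<xi>) powr (- \<alpha>) * poly (pderiv (piece dt u k i n j)) \<xi>))"

text \<open>Coefficient of u_j in (dt)^alpha D^alpha_{k,i} u_n (D is linear in the grid values).\<close>
definition coef :: "real \<Rightarrow> real \<Rightarrow> nat \<Rightarrow> nat \<Rightarrow> nat \<Rightarrow> nat \<Rightarrow> real" where
  "coef dt \<alpha> k i n j = dt powr \<alpha> * Dfrac dt \<alpha> k i (\<lambda>l. if l = j then 1 else 0) n"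

text \<open>omega^{(k,i)}_m: the coefficient of u_j for k <= j <= n, with n - j = m (taking n = m + k, j = k).\<close>
definition omega :: "real \<Rightarrow> real \<Rightarrow> nat \<Rightarrow> nat \<Rightarrow> nat \<Rightarrow> real" where
  "omega dt \<alpha> k i m = coef dt \<alpha> k i (m + k) k"

definition wstart :: "real \<Rightarrow> real \<Rightarrow> nat \<Rightarrow> nat \<Rightarrow> nat \<Rightarrow> nat \<Rightarrow> real" where
  "wstart dt \<alpha> k i n j = coef dt \<alpha> k i n j - omega dt \<alpha> k i (n - j)"

definition gcoef :: "real \<Rightarrow> real \<Rightarrow> nat \<Rightarrow> nat \<Rightarrow> (nat \<Rightarrow> complex) \<Rightarrow> nat \<Rightarrow> complex" where
  "gcoef dt \<alpha> k i u n =
     - (\<Sum>j<k. u j * complex_of_real (wstart dt \<alpha> k i (n + k) j + omega dt \<alpha> k i (n + k - j)))"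

end

theory Submission
  imports Defs "HOL-Real_Asymp.Real_Asymp"
begin

lemma interp_zero:
  fixes dt :: real
  assumes dt: "0 < dt"
    and nj: "\<forall>l\<in>{j' + q - m - 1 .. j' + q - 1}. l \<noteq> j"
    and cd: "m + 1 \<le> card {j' + q - m - 1 .. j' + q - 1}"
  shows "interp dt (\<lambda>l. if l = j then 1 else 0) m j' q = 0"
  unfolding interp_def
proof (rule the_equality)
  show "degree (0::real poly) \<le> m \<and>
    (\<forall>l\<in>{j' + q - m - 1..j' + q - 1}. poly 0 (real l * dt) = (if l = j then 1 else 0))"
    using nj by auto
next
  fix p :: "real poly"
  assume h: "degree p \<le> m \<and>
    (\<forall>l\<in>{j' + q - m - 1..j' + q - 1}. poly p (real l * dt) = (if l = j then 1 else 0))"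
  show "p = 0"
  proof (rule ccontr)
    assume p: "p \<noteq> 0"
    let ?S = "{j' + q - m - 1..j' + q - 1}"
    have sub: "(\<lambda>l. real l * dt) ` ?S \<subseteq> {x. poly p x = 0}"
      using h nj by auto
    have inj: "inj_on (\<lambda>l. real l * dt) ?S"
      using dt by (auto simp: inj_on_def)
    have "card ?S = card ((\<lambda>l. real l * dt) ` ?S)"
      using card_image[OF inj] by simp
    also have "\<dots> \<le> card {x. poly p x = 0}"
      by (rule card_mono[OF poly_roots_finite[OF p] sub])
    also have "\<dots> \<le> degree p" by (rule card_poly_roots_bound[OF p])
    finally show False using h cd by linarith
  qed
qed

lemma int_tendsto:
  fixes q :: "real poly" and dt \<alpha> :: real and l :: nat
  assumes dt: "0 < dt" and al: "0 < \<alpha>"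
  shows "(\<lambda>N. integral {real (l - 1) * dt .. real l * dt}
           (\<lambda>\<xi>. (real N * dt - \<xi>) powr (- \<alpha>) * poly q \<xi>)) \<longlonglongrightarrow> 0"
proof -
  let ?I = "{real (l - 1) * dt .. real l * dt}"
  have "compact (poly q ` ?I)"
    by (intro compact_continuous_image) (auto intro: continuous_intros)
  then have "bounded (poly q ` ?I)" by (rule compact_imp_bounded)
  then obtain B where B: "B > 0" "\<And>x. x \<in> ?I \<Longrightarrow> \<bar>poly q x\<bar> \<le> B"
    unfolding bounded_pos by auto
  define C where "C = Henstock_Kurzweil_Integration.content ?I"
  have C: "C \<ge> 0" unfolding C_def by simp
  have lim1: "filterlim (\<lambda>N::nat. (real N - real l) * dt) at_top sequentially"
    using dt by real_asymp
  have lim2: "(\<lambda>N::nat. B * ((real N - real l) * dt) powr (- \<alpha>) * C) \<longlonglongrightarrow> 0"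
    using tendsto_neg_powr[OF _ lim1, of "- \<alpha>"] al
    by (auto intro!: tendsto_mult_left_zero tendsto_mult_right_zero)
  show ?thesis
  proof (rule Lim_null_comparison[OF _ lim2])
    show "\<forall>\<^sub>F N in sequentially. norm (integral ?I
           (\<lambda>\<xi>. (real N * dt - \<xi>) powr (- \<alpha>) * poly q \<xi>))
          \<le> B * ((real N - real l) * dt) powr (- \<alpha>) * C"
    proof (rule eventually_sequentiallyI[of "l + 1"])
      fix N assume N: "l + 1 \<le> N"
      let ?f = "\<lambda>\<xi>. (real N * dt - \<xi>) powr (- \<alpha>) * poly q \<xi>"
      have bnd: "norm (?f x) \<le> B * ((real N - real l) * dt) powr (- \<alpha>)" if x: "x \<in> ?I" for x
      proof -
        have pos: "0 < (real N - real l) * dt" using N dt by simp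
        have le: "(real N - real l) * dt \<le> real N * dt - x"
          using x by (simp add: algebra_simps)
        have "(real N * dt - x) powr (- \<alpha>) \<le> ((real N - real l) * dt) powr (- \<alpha>)"
          by (rule powr_mono2') (use al pos le in auto)
        moreover have "0 \<le> (real N * dt - x) powr (- \<alpha>)" by simp
        ultimately show ?thesis
          using B(2)[OF x] by (simp add: abs_mult mult_mono' mult.commute)
      qed
      show "norm (integral ?I ?f) \<le> B * ((real N - real l) * dt) powr (- \<alpha>) * C"
      proof (cases "?f integrable_on ?I")
        case True
        show ?thesis unfolding C_def
          by (rule has_integral_bound_real[where S="{}"])
             (use B True bnd in \<open>auto intro: integrable_integral\<close>)
      next
        case False
        then show ?thesis using B C by (simp add: not_integrable_integral)
      qed
    qed
  qed
qed


lemma coef_tendsto: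
  fixes dt \<alpha> :: real
  assumes dt: "0 < dt" and al: "0 < \<alpha>" and i1: "1 \<le> i" and ik: "i \<le> k"
  shows "(\<lambda>N. coef dt \<alpha> k i N j) \<longlonglongrightarrow> 0"
proof -
  define e where "e = (\<lambda>l::nat. if l = j then (1::real) else 0)"
  define L where "L = j + k + 1"
  define Q where "Q = (\<lambda>l. if l \<le> k - i then interp dt e (k - 1) l (k - l) else interp dt e k l i)"
  define F where "F = (\<lambda>N l. integral {real (l - 1) * dt .. real l * dt}
        (\<lambda>\<xi>. (real N * dt - \<xi>) powr (- \<alpha>) * poly (pderiv (Q l)) \<xi>))"
  have pz: "piece dt e k i N l = 0" if "L < l" "l \<le> N" "L + k + 1 \<le> N" for N l
  proof -
    have "\<not> l \<le> k - i" using that unfolding L_def by simp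
    moreover have "interp dt e k l i = 0" if "l \<le> N - i + 1"
      unfolding e_def
    proof (rule interp_zero[OF dt])
      have a: "l + i - k - 1 = l - k + i - 1" "l + i - 1 = l - k + i - 1 + k"
        using \<open>L < l\<close> i1 unfolding L_def by arith+
      show "k + 1 \<le> card {l + i - k - 1..l + i - 1}"
        unfolding a card_atLeastAtMost by simp
      show "\<forall>la\<in>{l + i - k - 1..l + i - 1}. la \<noteq> j"
        using \<open>L < l\<close> i1 unfolding L_def by auto
    qed
    moreover have "interp dt e k l (N + 1 - l) = 0"
      unfolding e_def
    proof (rule interp_zero[OF dt])
      have a: "l + (N + 1 - l) - k - 1 = N - k" "l + (N + 1 - l) - 1 = N - k + k"
        using \<open>l \<le> N\<close> \<open>L + k + 1 \<le> N\<close> unfolding L_def by arith+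
      show "k + 1 \<le> card {l + (N + 1 - l) - k - 1..l + (N + 1 - l) - 1}"
        unfolding a card_atLeastAtMost by simp
      show "\<forall>la\<in>{l + (N + 1 - l) - k - 1..l + (N + 1 - l) - 1}. la \<noteq> j"
        using \<open>l \<le> N\<close> \<open>L + k + 1 \<le> N\<close> unfolding a L_def by auto
    qed
    ultimately show ?thesis unfolding piece_def by auto
  qed
  have pQ: "piece dt e k i N l = Q l" if "l \<le> L" "L + k + 1 \<le> N" for N l
    using that ik unfolding piece_def Q_def by auto
  have eq: "coef dt \<alpha> k i N j = dt powr \<alpha> * (1 / Gamma (1 - \<alpha>) * (\<Sum>l = 1..L. F N l))"
    if N: "L + k + 1 \<le> N" for N
  proof -
    have U: "{1..N} = {1..L} \<union> {L+1..N}" using N by auto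
    have z: "(\<Sum>l = L+1..N. integral {real (l - 1) * dt .. real l * dt}
        (\<lambda>\<xi>. (real N * dt - \<xi>) powr (- \<alpha>) * poly (pderiv (piece dt e k i N l)) \<xi>)) = 0"
      by (rule sum.neutral) (auto simp: pz[OF _ _ N])
    have o: "(\<Sum>l = 1..L. integral {real (l - 1) * dt .. real l * dt}
        (\<lambda>\<xi>. (real N * dt - \<xi>) powr (- \<alpha>) * poly (pderiv (piece dt e k i N l)) \<xi>)) = (\<Sum>l = 1..L. F N l)"
      by (rule sum.cong) (auto simp: pQ[OF _ N] F_def)
    show ?thesis
      unfolding coef_def Dfrac_def e_def[symmetric] U
      by (subst sum.union_disjoint) (simp_all only: z o finite_atLeastAtMost, auto)
  qed
  have lim: "(\<lambda>N. dt powr \<alpha> * (1 / Gamma (1 - \<alpha>) * (\<Sum>l = 1..L. F N l))) \<longlonglongrightarrow> 0"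
  proof -
    have "(\<lambda>N. \<Sum>l = 1..L. F N l) \<longlonglongrightarrow> (\<Sum>l = 1..L. 0)"
      unfolding F_def by (intro tendsto_sum int_tendsto[OF dt al])
    then have "(\<lambda>N. \<Sum>l = 1..L. F N l) \<longlonglongrightarrow> 0" by simp
    then show ?thesis
      by (intro tendsto_mult_right_zero)
  qed
  show ?thesis
    by (rule Lim_transform_eventually[OF lim])
       (rule eventually_sequentiallyI[of "L + k + 1"], simp add: eq)
qed


theorem lemma3p4:
  fixes \<alpha> dt :: real and k i :: nat and u :: "nat \<Rightarrow> complex"
  assumes "0 < \<alpha>" "\<alpha> < 1" "1 \<le> i" "i \<le> k" "k \<le> 6" "0 < dt"
  shows "(\<lambda>n. gcoef dt \<alpha> k i u n) \<longlonglongrightarrow> 0"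
proof -
  have g: "gcoef dt \<alpha> k i u n = - (\<Sum>j<k. u j * complex_of_real (coef dt \<alpha> k i (n + k) j))" for n
    unfolding gcoef_def wstart_def by simp
  have c: "(\<lambda>n. coef dt \<alpha> k i (n + k) j) \<longlonglongrightarrow> 0" for j
    using LIMSEQ_ignore_initial_segment[OF coef_tendsto[OF assms(6) assms(1) assms(3) assms(4)], of k j]
    by simp
  have "(\<lambda>n. - (\<Sum>j<k. u j * complex_of_real (coef dt \<alpha> k i (n + k) j))) \<longlonglongrightarrow> - (\<Sum>j<k. u j * complex_of_real 0)"
    by (intro tendsto_minus tendsto_sum tendsto_mult tendsto_const tendsto_of_real c)
  then show ?thesis unfolding g by simp
qed

end
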